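(* Let $f:\mathbb{R}^n\to(-\infty,+\infty]$ be a proper closed function, let $\mathcal{M}$ be a $C^1$-smooth embedded submanifold containing $\bar x$, and suppose $f$ is $C^1$-partly smooth around $\bar x$ relative to $\mathcal{M}$ with $0\in\operatorname{ri}\partial f(\bar x)$. Then for all $x\in\mathcal{M}$ near $\bar x$, $g_{\mathcal{U}}(x)\in\operatorname{ri}\partial f(x)$ and $g_{\mathcal{U}}(x)=P_{\partial f(x)}(0)$.
   Context: $\hat\partial f$ is the Fréchet and $\partial f$ the limiting subdifferential. Partial smoothness: $f$ is partly smooth at a point $x\in\mathcal M$ relative to a $C^p$ manifold $\mathcal{M}$ (for all subgradients) if: (Regularity) $\hat\partial f(z)=\partial f(z)\neq\varnothing$ for all $z\in\mathcal{M}$ near $x$; (Restricted smoothness) $f|_{\mathcal{M}}$ is $C^p$-smooth around $x$; (Sharpness) $\operatorname{par}\partial f(x)$ (the subspace parallel to the affine hull of $\partial f(x)$) equals $N_x\mathcal{M}$; (Inner semicontinuity) for every $y\in\partial f(x)$ and every sequence $x_r\to x$ in $\mathcal{M}$ there exist $y_r\in\partial f(x_r)$ with $y_r\to y$. "$C^1$-partly smooth around $\bar x$ relative to $\mathcal{M}$" means this holds with $p=1$ at every point of $\mathcal M$ near $\bar x$. For $g\in\partial f(x)$: $\mathcal{V}(x)=\operatorname{lin}(\partial f(x)-g)$, $\mathcal{U}(x)=\mathcal{V}(x)^\perp$, and $g_{\mathcal U}(x)=P_{\mathcal U(x)}(g)$, independent of the choice of $g\in\partial f(x)$. $P_{\partial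 f(x)}(0)$ is the nearest point of the closed convex set $\partial f(x)$ to $0$. *)

theory Defs
  imports "HOL-Analysis.Analysis"
begin

text \<open>Functions f : R^n -> (-infinity, +infinity] are modelled as maps into ereal
  on an arbitrary Euclidean space.\<close>

definition proper_fun :: "('a::euclidean_space \<Rightarrow> ereal) \<Rightarrow> bool" where
  "proper_fun f \<longleftrightarrow> (\<forall>x. f x \<noteq> -\<infinity>) \<and> (\<exists>x. f x \<noteq> \<infinity>)"

definition closed_fun :: "('a::euclidean_space \<Rightarrow> ereal) \<Rightarrow> bool" where
  "closed_fun f \<longleftrightarrow> closed {(x, t::real). f x \<le> ereal t}"

definition frechet_subdiff :: "('a::euclidean_space \<Rightarrow> ereal) \<Rightarrow> 'a \<Rightarrow> 'a set" where
  "frechet_subdiff f x = {v. \<bar>f x\<bar> \<noteq> \<infinity> \<and>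
     (\<forall>e>0. \<exists>d>0. \<forall>y. norm (y - x) < d \<longrightarrow>
        ereal (real_of_ereal (f x) + inner v (y - x) - e * norm (y - x)) \<le> f y)}"

definition limiting_subdiff :: "('a::euclidean_space \<Rightarrow> ereal) \<Rightarrow> 'a \<Rightarrow> 'a set" where
  "limiting_subdiff f x = {v. \<bar>f x\<bar> \<noteq> \<infinity> \<and>
     (\<exists>xs vs. xs \<longlonglongrightarrow> x \<and> (\<lambda>k. f (xs k)) \<longlonglongrightarrow> f x \<and>
        (\<forall>k. vs k \<in> frechet_subdiff f (xs k)) \<and> vs \<longlonglongrightarrow> v)}"

definition C1_on :: "'a::euclidean_space set \<Rightarrow> ('a \<Rightarrow> 'b::euclidean_space) \<Rightarrow> bool" where
  "C1_on U F \<longleftrightarrow> (\<exists>F' :: 'a \<Rightarrow> 'a \<Rightarrow>\<^sub>L 'b.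
      (\<forall>z\<in>U. (F has_derivative blinfun_apply (F' z)) (at z)) \<and> continuous_on U F')"

definition C1_submanifold :: "'a::euclidean_space set \<Rightarrow> bool" where
  "C1_submanifold M \<longleftrightarrow> (\<forall>x\<in>M. \<exists>U V \<phi> \<psi> L. open U \<and> open V \<and> x \<in> U \<and>
      homeomorphism U V (\<phi> :: 'a \<Rightarrow> 'a) (\<psi> :: 'a \<Rightarrow> 'a) \<and> C1_on U \<phi> \<and> C1_on V \<psi> \<and> subspace L \<and>
      \<phi> ` (M \<inter> U) = V \<inter> L)"

definition tangent_space :: "'a::euclidean_space set \<Rightarrow> 'a \<Rightarrow> 'a set" where
  "tangent_space M x = {v. \<exists>\<gamma> e. e > 0 \<and> \<gamma> ` {-e<..<e} \<subseteq> M \<and> \<gamma> 0 = x \<and>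
      (\<gamma> has_vector_derivative v) (at 0)}"

definition normal_space :: "'a::euclidean_space set \<Rightarrow> 'a \<Rightarrow> 'a set" where
  "normal_space M x = {w. \<forall>v\<in>tangent_space M x. inner w v = 0}"

definition par :: "'a::euclidean_space set \<Rightarrow> 'a set" where
  "par S = {u - w | u w. u \<in> affine hull S \<and> w \<in> affine hull S}"

definition partly_smooth_at ::
  "('a::euclidean_space \<Rightarrow> ereal) \<Rightarrow> 'a set \<Rightarrow> 'a \<Rightarrow> bool" where
  "partly_smooth_at f M x \<longleftrightarrow> x \<in> M \<and>
     \<comment> \<open>regularity\<close>
     (\<exists>d>0. \<forall>z\<in>M. dist z x < d \<longrightarrow>
        frechet_subdiff f z = limiting_subdiff f z \<and> limiting_subdiff f z \<noteq> {}) \<and>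
     \<comment> \<open>restricted smoothness (C^1)\<close>
     (\<exists>U F. open U \<and> x \<in> U \<and> C1_on U (F :: 'a \<Rightarrow> real) \<and>
        (\<forall>z\<in>M \<inter> U. f z = ereal (F z))) \<and>
     \<comment> \<open>sharpness\<close>
     par (limiting_subdiff f x) = normal_space M x \<and>
     \<comment> \<open>inner semicontinuity\<close>
     (\<forall>y\<in>limiting_subdiff f x. \<forall>xs. (\<forall>r. xs r \<in> M) \<and> xs \<longlonglongrightarrow> x \<longrightarrow>
        (\<exists>ys. (\<forall>r. ys r \<in> limiting_subdiff f (xs r)) \<and> ys \<longlonglongrightarrow> y))"

definition C1_partly_smooth_around ::
  "('a::euclidean_space \<Rightarrow> ereal) \<Rightarrow> 'a set \<Rightarrow> 'a \<Rightarrow> bool" where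
  "C1_partly_smooth_around f M xbar \<longleftrightarrow>
     (\<exists>d>0. \<forall>x\<in>M. dist x xbar < d \<longrightarrow> partly_smooth_at f M x)"

text \<open>V(x) = lin(\<partial>f(x) - g), U(x) = V(x)^perp, g_U(x) = P_{U(x)} g for g in \<partial>f(x)\<close>
definition V_space :: "('a::euclidean_space \<Rightarrow> ereal) \<Rightarrow> 'a \<Rightarrow> 'a set" where
  "V_space f x = span {v - (SOME g. g \<in> limiting_subdiff f x) | v. v \<in> limiting_subdiff f x}"

definition U_space :: "('a::euclidean_space \<Rightarrow> ereal) \<Rightarrow> 'a \<Rightarrow> 'a set" where
  "U_space f x = {u. \<forall>v\<in>V_space f x. inner u v = 0}"

definition gU :: "('a::euclidean_space \<Rightarrow> ereal) \<Rightarrow> 'a \<Rightarrow> 'a" where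
  "gU f x = closest_point (U_space f x) (SOME g. g \<in> limiting_subdiff f x)"

end

theory Submission
  imports Defs
begin


lemma norm_add_pythagorean:
  fixes x y :: "'a::real_inner"
  assumes "inner x y = 0" shows "(norm (x + y))^2 = (norm x)^2 + (norm y)^2"
  using assms by (simp add: power2_norm_eq_inner inner_add_left inner_add_right inner_commute)

lemma frechet_convex: "convex (frechet_subdiff f x)"
proof (rule convexI)
  fix v1 v2 and t1 t2 :: real
  assume v1: "v1 \<in> frechet_subdiff f x" and v2: "v2 \<in> frechet_subdiff f x"
    and t: "0 \<le> t1" "0 \<le> t2" "t1 + t2 = 1"
  show "t1 *\<^sub>R v1 + t2 *\<^sub>R v2 \<in> frechet_subdiff f x"
    unfolding frechet_subdiff_def
  proof (intro CollectI conjI allI impI)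
    show "\<bar>f x\<bar> \<noteq> \<infinity>" using v1 by (simp add: frechet_subdiff_def)
    fix e :: real assume e: "e > 0"
    obtain d1 where d1: "d1 > 0" "\<forall>y. norm (y - x) < d1 \<longrightarrow>
        ereal (real_of_ereal (f x) + inner v1 (y - x) - e * norm (y - x)) \<le> f y"
      using v1 e unfolding frechet_subdiff_def by blast
    obtain d2 where d2: "d2 > 0" "\<forall>y. norm (y - x) < d2 \<longrightarrow>
        ereal (real_of_ereal (f x) + inner v2 (y - x) - e * norm (y - x)) \<le> f y"
      using v2 e unfolding frechet_subdiff_def by blast
    show "\<exists>d>0. \<forall>y. norm (y - x) < d \<longrightarrow>
        ereal (real_of_ereal (f x) + inner (t1 *\<^sub>R v1 + t2 *\<^sub>R v2) (y - x) - e * norm (y - x)) \<le> f y"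
    proof (intro exI[of _ "min d1 d2"] conjI allI impI)
      show "min d1 d2 > 0" using d1 d2 by simp
      fix y assume "norm (y - x) < min d1 d2"
      then have h1: "ereal (real_of_ereal (f x) + inner v1 (y - x) - e * norm (y - x)) \<le> f y"
        and h2: "ereal (real_of_ereal (f x) + inner v2 (y - x) - e * norm (y - x)) \<le> f y"
        using d1 d2 by auto
      define a where "a = real_of_ereal (f x) + inner v1 (y - x) - e * norm (y - x)"
      define b where "b = real_of_ereal (f x) + inner v2 (y - x) - e * norm (y - x)"
      have eq: "real_of_ereal (f x) + inner (t1 *\<^sub>R v1 + t2 *\<^sub>R v2) (y - x) - e * norm (y - x)
          = t1 * a + t2 * b"
      proof -
        have t2: "t2 = 1 - t1" using t(3) by simp
        show ?thesis unfolding a_def b_def t2 by (simp add: inner_add_left algebra_simps)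
      qed
      have "t1 * a + t2 * b \<le> max a b"
      proof -
        have "t1 * a \<le> t1 * max a b" using t by (simp add: mult_left_mono)
        moreover have "t2 * b \<le> t2 * max a b" using t by (simp add: mult_left_mono)
        ultimately have "t1 * a + t2 * b \<le> t1 * max a b + t2 * max a b" by (rule add_mono)
        also have "\<dots> = (t1 + t2) * max a b" by (simp add: algebra_simps)
        finally show ?thesis using t(3) by simp
      qed
      then have "ereal (t1 * a + t2 * b) \<le> ereal (max a b)" by (simp only: ereal_less_eq(3))
      also have "\<dots> \<le> f y"
      proof -
        have m: "max a b = a \<or> max a b = b" by (simp add: max_def)
        thus ?thesis using h1[folded a_def] h2[folded b_def] by auto
      qed
      finally show "ereal (real_of_ereal (f x) + inner (t1 *\<^sub>R v1 + t2 *\<^sub>R v2) (y - x) - e * norm (y - x)) \<le> f y"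
        using eq by simp
    qed
  qed
qed

lemma V_sub:
  assumes "limiting_subdiff f x \<noteq> {}" "v \<in> V_space f x"
  shows "v \<in> par (limiting_subdiff f x) \<and>
         (SOME g. g \<in> limiting_subdiff f x) + v \<in> affine hull (limiting_subdiff f x)"
proof -
  let ?S = "limiting_subdiff f x"
  let ?g = "SOME g. g \<in> ?S"
  have g: "?g \<in> ?S" using assms(1) by (metis some_in_eq)
  hence gA: "?g \<in> affine hull ?S" by (simp add: hull_inc)
  have sub: "subspace ((\<lambda>a. a - ?g) ` (affine hull ?S))"
    by (rule affine_diffs_subspace_subtract) (auto simp: gA)
  have "{v - ?g | v. v \<in> ?S} \<subseteq> (\<lambda>a. a - ?g) ` (affine hull ?S)"
    by (auto simp: hull_inc)
  hence "V_space f x \<subseteq> (\<lambda>a. a - ?g) ` (affine hull ?S)"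
    unfolding V_space_def using sub by (simp add: span_minimal)
  then obtain a where a: "a \<in> affine hull ?S" "v = a - ?g" using assms(2) by blast
  show ?thesis using a gA unfolding par_def by auto
qed

lemma gU_props:
  assumes ne: "limiting_subdiff f x \<noteq> {}"
  shows "gU f x \<in> affine hull (limiting_subdiff f x)"
    and "\<And>s. s \<in> limiting_subdiff f x \<Longrightarrow> s - gU f x \<in> V_space f x"
    and "\<And>s. s \<in> limiting_subdiff f x \<Longrightarrow> norm (gU f x) \<le> norm s"
    and "gU f x \<in> limiting_subdiff f x \<Longrightarrow> closest_point (limiting_subdiff f x) 0 = gU f x"
proof -
  let ?S = "limiting_subdiff f x"
  let ?g = "SOME g. g \<in> ?S"
  have g: "?g \<in> ?S" using ne by (metis some_in_eq)
  have spV: "span (V_space f x) = V_space f x" unfolding V_space_def by simp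
  obtain w q where w: "w \<in> span (V_space f x)" and q: "\<And>v. v \<in> span (V_space f x) \<Longrightarrow> orthogonal q v"
    and gwq: "?g = w + q"
    using orthogonal_subspace_decomp_exists by blast
  have wV: "w \<in> V_space f x" using w spV by simp
  have qo: "\<And>v. v \<in> V_space f x \<Longrightarrow> inner q v = 0" using q spV by (simp add: orthogonal_def)
  have qU: "q \<in> U_space f x" using qo by (simp add: U_space_def)
  have Usub: "\<And>z. z \<in> U_space f x \<Longrightarrow> inner w z = 0"
    using wV by (simp add: U_space_def inner_commute)
  have cp: "closest_point (U_space f x) ?g = q"
    unfolding closest_point_def
  proof (rule some_equality)
    show "q \<in> U_space f x \<and> (\<forall>y\<in>U_space f x. dist ?g q \<le> dist ?g y)"
    proof (intro conjI ballI qU)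
      fix y assume y: "y \<in> U_space f x"
      have "q - y \<in> U_space f x" using qU y by (auto simp: U_space_def inner_diff_left)
      hence o: "inner w (q - y) = 0" by (rule Usub)
      have "(dist ?g y)^2 = (norm (w + (q - y)))^2" by (simp add: dist_norm gwq algebra_simps)
      also have "\<dots> = (norm w)^2 + (norm (q - y))^2" using o by (simp add: norm_add_pythagorean)
      finally have "(dist ?g q)^2 \<le> (dist ?g y)^2" by (simp add: dist_norm gwq)
      thus "dist ?g q \<le> dist ?g y" by (simp add: power2_le_iff_abs_le)
    qed
  next
    fix y assume y: "y \<in> U_space f x \<and> (\<forall>z\<in>U_space f x. dist ?g y \<le> dist ?g z)"
    hence le: "dist ?g y \<le> dist ?g q" using qU by blast
    have "q - y \<in> U_space f x" using qU y by (auto simp: U_space_def inner_diff_left)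
    hence o: "inner w (q - y) = 0" by (rule Usub)
    have "(dist ?g y)^2 = (norm (w + (q - y)))^2" by (simp add: dist_norm gwq algebra_simps)
    also have "\<dots> = (norm w)^2 + (norm (q - y))^2" using o by (simp add: norm_add_pythagorean)
    moreover have "dist ?g q = norm w" by (simp add: dist_norm gwq)
    moreover have "(dist ?g y)^2 \<le> (dist ?g q)^2" using le by (simp add: power_mono)
    ultimately have "(norm w)^2 + (norm (q - y))^2 \<le> (norm w)^2" by simp
    hence "norm (q - y) = 0" by simp
    thus "y = q" by simp
  qed
  have gUq: "gU f x = q" unfolding gU_def using cp by simp
  have "?g + (- w) \<in> affine hull ?S"
  proof -
    have "-w \<in> V_space f x" using wV unfolding V_space_def by (rule span_neg)
    thus ?thesis using V_sub[OF ne] by blast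
  qed
  then show "gU f x \<in> affine hull ?S" using gUq gwq by (simp add: algebra_simps)
  have sV: "s - gU f x \<in> V_space f x" if s: "s \<in> ?S" for s
  proof -
    have "s - ?g \<in> V_space f x" unfolding V_space_def using s by (intro span_base) blast
    hence "(s - ?g) + w \<in> V_space f x" using wV unfolding V_space_def by (intro span_add) auto
    thus ?thesis using gUq gwq by (simp add: algebra_simps)
  qed
  thus "\<And>s. s \<in> ?S \<Longrightarrow> s - gU f x \<in> V_space f x" by blast
  have pyth: "(norm s)^2 = (norm (gU f x))^2 + (norm (s - gU f x))^2" if s: "s \<in> ?S" for s
  proof -
    have "inner (gU f x) (s - gU f x) = 0" using qo sV[OF s] gUq by simp
    hence "(norm (gU f x + (s - gU f x)))^2 = (norm (gU f x))^2 + (norm (s - gU f x))^2"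
      by (rule norm_add_pythagorean)
    thus ?thesis by simp
  qed
  have nle: "norm (gU f x) \<le> norm s" if s: "s \<in> ?S" for s
  proof -
    have "(norm (gU f x))^2 \<le> (norm s)^2" using pyth[OF s] by simp
    thus ?thesis by (simp add: power2_le_iff_abs_le)
  qed
  thus "\<And>s. s \<in> ?S \<Longrightarrow> norm (gU f x) \<le> norm s" by blast
  assume gin: "gU f x \<in> ?S"
  show "closest_point ?S 0 = gU f x"
    unfolding closest_point_def
  proof (rule some_equality)
    show "gU f x \<in> ?S \<and> (\<forall>y\<in>?S. dist 0 (gU f x) \<le> dist 0 y)"
      using gin nle by (simp add: dist_0_norm)
  next
    fix y assume y: "y \<in> ?S \<and> (\<forall>z\<in>?S. dist 0 y \<le> dist 0 z)"
    hence "norm y \<le> norm (gU f x)" using gin by (auto simp: dist_norm)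
    hence "(norm y)^2 \<le> (norm (gU f x))^2" by (simp add: power_mono)
    hence "norm (y - gU f x) = 0" using pyth[of y] y by simp
    thus "y = gU f x" by simp
  qed
qed

lemma sep_lemma:
  fixes S :: "'a::euclidean_space set"
  assumes cvx: "convex S" and ne: "S \<noteq> {}" and xno: "x \<notin> rel_interior S"
    and W: "subspace W" and diff: "\<And>y. y \<in> S \<Longrightarrow> y - x \<in> W"
  shows "\<exists>u\<in>W. norm u = 1 \<and> (\<forall>y\<in>S. inner u y \<le> inner u x)"
proof -
  obtain a y0 where a1: "\<And>y. y \<in> S \<Longrightarrow> inner a x \<le> inner a y" and y0: "y0 \<in> S" "inner a x < inner a y0"
  proof (cases "x \<in> closure S")
    case True
    obtain a where "a \<noteq> 0" and h1: "\<And>y. y \<in> closure S \<Longrightarrow> a \<bullet> x \<le> a \<bullet> y"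
      and h2: "\<And>y. y \<in> rel_interior S \<Longrightarrow> a \<bullet> x < a \<bullet> y"
      using supporting_hyperplane_relative_frontier[OF cvx True xno] by blast
    obtain y0 where y0: "y0 \<in> rel_interior S" using rel_interior_eq_empty[OF cvx] ne by blast
    show ?thesis
    proof (rule that[of a y0])
      fix y assume "y \<in> S"
      hence "y \<in> closure S" using closure_subset by (rule subsetD[rotated])
      thus "a \<bullet> x \<le> a \<bullet> y" by (rule h1)
    next
      show "y0 \<in> S" using y0 rel_interior_subset by (rule subsetD[rotated])
      show "a \<bullet> x < a \<bullet> y0" using y0 by (rule h2)
    qed
  next
    case False
    obtain a b where ab: "inner a x < b" "\<forall>y\<in>closure S. inner a y > b"
      using separating_hyperplane_closed_point[OF convex_closure[OF cvx] closed_closure False] by blast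
    obtain y0 where y0: "y0 \<in> S" using ne by blast
    have lt: "inner a x < inner a y" if "y \<in> S" for y
    proof -
      have "y \<in> closure S" using that closure_subset by (rule subsetD[rotated])
      thus ?thesis using ab by fastforce
    qed
    show ?thesis
    proof (rule that[of a y0])
      show "\<And>y. y \<in> S \<Longrightarrow> a \<bullet> x \<le> a \<bullet> y" using lt less_imp_le by blast
      show "y0 \<in> S" by (rule y0)
      show "a \<bullet> x < a \<bullet> y0" using lt y0 by blast
    qed
  qed
  obtain a1 a2 where a1W: "a1 \<in> span W" and a2: "\<And>w. w \<in> span W \<Longrightarrow> orthogonal a2 w" and aeq: "a = a1 + a2"
    using orthogonal_subspace_decomp_exists by blast
  have spW: "span W = W" using W by (simp add: span_eq_iff)
  have key: "inner a (y - x) = inner a1 (y - x)" if "y \<in> S" for y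
  proof -
    have "inner a2 (y - x) = 0" using a2 diff[OF that] spW by (simp add: orthogonal_def)
    thus ?thesis by (simp add: aeq inner_add_left)
  qed
  have pos: "inner a1 (y0 - x) > 0" using key[OF y0(1)] y0(2) by (simp add: inner_diff_right)
  hence a1nz: "a1 \<noteq> 0" by auto
  define u where "u = - (1 / norm a1) *\<^sub>R a1"
  have "u \<in> W" unfolding u_def using a1W spW W by (simp add: subspace_scale subspace_neg)
  moreover have "norm u = 1" unfolding u_def using a1nz by simp
  moreover have "inner u y \<le> inner u x" if "y \<in> S" for y
  proof -
    have "inner a1 (y - x) \<ge> 0" using key[OF that] a1[OF that] by (simp add: inner_diff_right)
    hence "inner u (y - x) \<le> 0" unfolding u_def using a1nz
      by (simp add: inner_diff_right divide_right_mono)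
    thus ?thesis by (simp add: inner_diff_right)
  qed
  ultimately show ?thesis by blast
qed

lemma deriv_in_subspace:
  fixes h :: "real \<Rightarrow> 'a::euclidean_space"
  assumes L: "subspace L" and h0: "h 0 \<in> L" and ev: "eventually (\<lambda>t. h t \<in> L) (at 0)"
    and d: "(h has_vector_derivative w) (at 0)"
  shows "w \<in> L"
proof -
  have "(h has_derivative (\<lambda>t. t *\<^sub>R w)) (at 0 within {0<..})"
    using d by (simp add: has_vector_derivative_def has_derivative_at_withinI)
  hence lim: "((\<lambda>y. ((h y - h 0) - (y - 0) *\<^sub>R w) /\<^sub>R norm (y - 0)) \<longlongrightarrow> 0) (at 0 within {0<..})"
    by (simp add: has_derivative_at_within)
  have t: "((\<lambda>y. ((h y - h 0) - (y - 0) *\<^sub>R w) /\<^sub>R norm (y - 0) + w) \<longlongrightarrow> w) (at 0 within {0<..})"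
    using tendsto_add[OF lim tendsto_const[of w]] by simp
  have e: "\<forall>\<^sub>F y in at 0 within {0<..}. ((h y - h 0) - (y - 0) *\<^sub>R w) /\<^sub>R norm (y - 0) + w = (h y - h 0) /\<^sub>R y"
  proof -
    have pt: "(h y - h 0 - y *\<^sub>R w) /\<^sub>R y + w = (h y - h 0) /\<^sub>R y" if "y > 0" for y :: real
      using that by (simp add: scaleR_diff_right)
    show ?thesis unfolding eventually_at_filter by (intro always_eventually) (simp add: pt)
  qed
  have lim2: "((\<lambda>y. (h y - h 0) /\<^sub>R y) \<longlongrightarrow> w) (at 0 within {0<..})"
    by (rule Lim_transform_eventually[OF t e])
  show ?thesis
  proof (rule Lim_in_closed_set[OF closed_subspace[OF L] _ _ lim2])
    have "eventually (\<lambda>t. h t \<in> L) (at 0 within {0<..})"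
      using filter_leD[OF at_le[OF subset_UNIV] ev] .
    thus "eventually (\<lambda>y. (h y - h 0) /\<^sub>R y \<in> L) (at 0 within {0<..})"
      by eventually_elim (use L h0 in \<open>simp add: subspace_diff subspace_scale\<close>)
    show "at (0::real) within {0<..} \<noteq> bot" by (simp add: at_within_eq_bot_iff)
  qed
qed




lemma normal_limit:
  fixes M :: "'a::euclidean_space set"
  assumes man: "C1_submanifold M" and xbar: "xbar \<in> M" and xs: "xs \<longlonglongrightarrow> xbar"
    and xsM: "\<And>r. xs r \<in> M" and usN: "\<And>r. us r \<in> normal_space M (xs r)" and us: "us \<longlonglongrightarrow> u"
  shows "u \<in> normal_space M xbar"
proof -
  obtain U V \<phi> \<psi> L where oU: "open U" and oV: "open V" and xU: "xbar \<in> U"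
    and hom: "homeomorphism U V (\<phi> :: 'a \<Rightarrow> 'a) (\<psi> :: 'a \<Rightarrow> 'a)" and c1p: "C1_on U \<phi>" and c1q: "C1_on V \<psi>"
    and L: "subspace L" and img: "\<phi> ` (M \<inter> U) = V \<inter> L"
    using bspec[OF man[unfolded C1_submanifold_def] xbar] by (elim exE conjE) (rule that)
  obtain F\<phi> :: "'a \<Rightarrow> 'a \<Rightarrow>\<^sub>L 'a" where F\<phi>: "\<And>z. z \<in> U \<Longrightarrow> (\<phi> has_derivative blinfun_apply (F\<phi> z)) (at z)"
    using c1p unfolding C1_on_def by blast
  obtain F\<psi> :: "'a \<Rightarrow> 'a \<Rightarrow>\<^sub>L 'a" where F\<psi>: "\<And>z. z \<in> V \<Longrightarrow> (\<psi> has_derivative blinfun_apply (F\<psi> z)) (at z)"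
    and F\<psi>c: "continuous_on V F\<psi>"
    using c1q unfolding C1_on_def by blast
  have inv1: "\<And>x. x \<in> U \<Longrightarrow> \<psi> (\<phi> x) = x" using hom by (simp add: homeomorphism_def)
  have \<phi>U: "\<phi> ` U = V" using hom by (simp add: homeomorphism_def)
  have \<phi>c: "continuous_on U \<phi>" using hom by (simp add: homeomorphism_def)
  have psiML: "\<psi> y \<in> M" if "y \<in> V \<inter> L" for y
  proof -
    have "y \<in> \<phi> ` (M \<inter> U)" using that img by simp
    then obtain m where m: "m \<in> M \<inter> U" "y = \<phi> m" by (rule imageE)
    hence "\<psi> y = m" using inv1 by simp
    thus ?thesis using m by simp
  qed
  have phiML: "\<phi> x \<in> V \<inter> L" if "x \<in> M \<inter> U" for x
    using imageI[OF that, of \<phi>] img by simp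
  have incl: "blinfun_apply (F\<psi> (\<phi> x)) l \<in> tangent_space M x" if x: "x \<in> M \<inter> U" and l: "l \<in> L" for x l
  proof -
    define y0 where "y0 = \<phi> x"
    have y0: "y0 \<in> V \<inter> L" using phiML[OF x] y0_def by simp
    obtain e0 where e0: "e0 > 0" "ball y0 e0 \<subseteq> V" using oV y0 open_contains_ball by blast
    define e where "e = e0 / (norm l + 1)"
    have nz: "norm l + 1 > 0" by (smt (verit) norm_ge_zero)
    have e: "e > 0" unfolding e_def using e0(1) nz by simp
    define \<gamma> where "\<gamma> = (\<lambda>t::real. \<psi> (y0 + t *\<^sub>R l))"
    have "\<gamma> t \<in> M" if t: "t \<in> {-e<..<e}" for t
    proof -
      have "\<bar>t\<bar> * norm l \<le> e * norm l" using t by (intro mult_right_mono) auto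
      also have "\<dots> < e * (norm l + 1)" using e by simp
      also have "\<dots> = e0" unfolding e_def using nz by (simp add: field_simps)
      finally have "dist y0 (y0 + t *\<^sub>R l) < e0" by (simp add: dist_norm)
      hence "y0 + t *\<^sub>R l \<in> V" using e0 by auto
      moreover have "y0 + t *\<^sub>R l \<in> L" using y0 L by (simp add: subspace_add subspace_scale l)
      ultimately show ?thesis unfolding \<gamma>_def using psiML by auto
    qed
    hence im: "\<gamma> ` {-e<..<e} \<subseteq> M" by blast
    have g0: "\<gamma> 0 = x" unfolding \<gamma>_def y0_def using inv1 x by simp
    have d1: "((\<lambda>t::real. y0 + t *\<^sub>R l) has_derivative (\<lambda>t. t *\<^sub>R l)) (at 0)"
      by (auto intro!: derivative_eq_intros)
    have d2: "(\<psi> has_derivative blinfun_apply (F\<psi> y0)) (at ((\<lambda>t::real. y0 + t *\<^sub>R l) 0))"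
      using F\<psi> y0 by simp
    have "((\<psi> \<circ> (\<lambda>t::real. y0 + t *\<^sub>R l)) has_derivative (blinfun_apply (F\<psi> y0) \<circ> (\<lambda>t. t *\<^sub>R l))) (at 0)"
      by (rule diff_chain_at[OF d1 d2])
    moreover have "(blinfun_apply (F\<psi> y0) \<circ> (\<lambda>t. t *\<^sub>R l)) = (\<lambda>t. t *\<^sub>R blinfun_apply (F\<psi> y0) l)"
      by (auto simp: blinfun.scaleR_right)
    ultimately have hv: "(\<gamma> has_vector_derivative blinfun_apply (F\<psi> y0) l) (at 0)"
      unfolding has_vector_derivative_def \<gamma>_def by (simp add: o_def)
    show ?thesis unfolding tangent_space_def y0_def[symmetric]
      apply (rule CollectI, rule exI[of _ \<gamma>], rule exI[of _ e])
      using e im g0 hv by simp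
  qed
  have tsub: "\<exists>l\<in>L. v = blinfun_apply (F\<psi> (\<phi> x)) l" if x: "x \<in> M \<inter> U" and v: "v \<in> tangent_space M x" for x v
  proof -
    obtain \<gamma> e where e: "e > 0" and im: "\<gamma> ` {-e<..<e} \<subseteq> M" and g0: "\<gamma> 0 = x"
      and gd: "(\<gamma> has_vector_derivative v) (at 0)"
      using v unfolding tangent_space_def by blast
    have "continuous (at 0) \<gamma>" using gd by (rule has_vector_derivative_continuous)
    hence "(\<gamma> \<longlongrightarrow> x) (at 0)" using g0 by (simp add: continuous_at)
    hence evU: "eventually (\<lambda>t. \<gamma> t \<in> U) (at 0)" using oU x by (simp add: topological_tendstoD)
    have eve: "eventually (\<lambda>t::real. t \<in> {-e<..<e}) (at 0)"
      unfolding eventually_at using e by (auto intro!: exI[of _ e] simp: dist_real_def)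
    have evL: "eventually (\<lambda>t. (\<phi> \<circ> \<gamma>) t \<in> L) (at 0)"
      using evU eve
    proof eventually_elim
      case (elim t)
      hence "\<gamma> t \<in> M \<inter> U" using im by auto
      thus ?case using phiML by auto
    qed
    have "((\<phi> \<circ> \<gamma>) has_derivative (blinfun_apply (F\<phi> (\<gamma> 0)) \<circ> (\<lambda>t. t *\<^sub>R v))) (at 0)"
      using gd F\<phi>[of "\<gamma> 0"] x g0 unfolding has_vector_derivative_def by (intro diff_chain_at) auto
    moreover have "(blinfun_apply (F\<phi> (\<gamma> 0)) \<circ> (\<lambda>t. t *\<^sub>R v)) = (\<lambda>t. t *\<^sub>R blinfun_apply (F\<phi> x) v)"
      using g0 by (auto simp: blinfun.scaleR_right)
    ultimately have hd: "((\<phi> \<circ> \<gamma>) has_vector_derivative blinfun_apply (F\<phi> x) v) (at 0)"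
      unfolding has_vector_derivative_def by simp
    have h0: "(\<phi> \<circ> \<gamma>) 0 \<in> L" using phiML x g0 by auto
    have wL: "blinfun_apply (F\<phi> x) v \<in> L" by (rule deriv_in_subspace[OF L h0 evL hd])
    have "((\<psi> \<circ> \<phi>) has_derivative (blinfun_apply (F\<psi> (\<phi> x)) \<circ> blinfun_apply (F\<phi> x))) (at x)"
      using F\<phi>[of x] F\<psi>[of "\<phi> x"] x phiML by (intro diff_chain_at) auto
    hence "((\<lambda>y. y) has_derivative (blinfun_apply (F\<psi> (\<phi> x)) \<circ> blinfun_apply (F\<phi> x))) (at x)"
      by (rule has_derivative_transform_within_open[OF _ oU]) (use x inv1 in auto)
    hence "(blinfun_apply (F\<psi> (\<phi> x)) \<circ> blinfun_apply (F\<phi> x)) = (\<lambda>y. y)"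
      using has_derivative_ident has_derivative_unique by blast
    hence "v = blinfun_apply (F\<psi> (\<phi> x)) (blinfun_apply (F\<phi> x) v)" by (metis comp_apply)
    thus ?thesis using wL by blast
  qed
  show ?thesis unfolding normal_space_def
  proof (intro CollectI ballI)
    fix v assume v: "v \<in> tangent_space M xbar"
    obtain l where l: "l \<in> L" and vl: "v = blinfun_apply (F\<psi> (\<phi> xbar)) l"
      using tsub[OF _ v] xbar xU by blast
    have evU: "eventually (\<lambda>r. xs r \<in> U) sequentially" using xs oU xU by (simp add: topological_tendstoD)
    have ev0: "eventually (\<lambda>r. inner (us r) (blinfun_apply (F\<psi> (\<phi> (xs r))) l) = 0) sequentially"
      using evU
    proof eventually_elim
      case (elim r)
      hence "blinfun_apply (F\<psi> (\<phi> (xs r))) l \<in> tangent_space M (xs r)" using incl[OF _ l] xsM by auto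
      thus ?case using usN[of r] unfolding normal_space_def by auto
    qed
    have "isCont \<phi> xbar" using \<phi>c oU xU continuous_on_eq_continuous_at by blast
    hence t1: "(\<lambda>r. \<phi> (xs r)) \<longlonglongrightarrow> \<phi> xbar" using xs by (rule isCont_tendsto_compose)
    have "\<phi> xbar \<in> V" using \<phi>U xU by blast
    hence "isCont F\<psi> (\<phi> xbar)" using F\<psi>c oV continuous_on_eq_continuous_at by blast
    hence t2: "(\<lambda>r. F\<psi> (\<phi> (xs r))) \<longlonglongrightarrow> F\<psi> (\<phi> xbar)" using t1 by (rule isCont_tendsto_compose)
    have t3: "(\<lambda>r. blinfun_apply (F\<psi> (\<phi> (xs r))) l) \<longlonglongrightarrow> v"
      unfolding vl by (rule blinfun.tendsto[OF t2 tendsto_const])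
    have t4: "(\<lambda>r. inner (us r) (blinfun_apply (F\<psi> (\<phi> (xs r))) l)) \<longlonglongrightarrow> inner u v"
      by (rule tendsto_inner[OF us t3])
    have t5: "(\<lambda>r. inner (us r) (blinfun_apply (F\<psi> (\<phi> (xs r))) l)) \<longlonglongrightarrow> 0"
      using ev0 by (rule tendsto_eventually)
    show "inner u v = 0" using LIMSEQ_unique[OF t4 t5] .
  qed
qed


lemma ps_basic:
  assumes "partly_smooth_at f M x"
  shows "limiting_subdiff f x \<noteq> {}" "convex (limiting_subdiff f x)"
proof -
  obtain d where d: "d > 0" "\<forall>z\<in>M. dist z x < d \<longrightarrow>
        frechet_subdiff f z = limiting_subdiff f z \<and> limiting_subdiff f z \<noteq> {}"
    and xM: "x \<in> M"
    using assms unfolding partly_smooth_at_def by blast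
  hence h: "frechet_subdiff f x = limiting_subdiff f x \<and> limiting_subdiff f x \<noteq> {}" by simp
  thus "limiting_subdiff f x \<noteq> {}" by blast
  show "convex (limiting_subdiff f x)" using h frechet_convex by metis
qed

lemma ps_sharp:
  assumes "partly_smooth_at f M x"
  shows "par (limiting_subdiff f x) = normal_space M x"
  using assms unfolding partly_smooth_at_def by blast

lemma ps_isc:
  assumes "partly_smooth_at f M x" "y \<in> limiting_subdiff f x" "\<And>r. xs r \<in> M" "xs \<longlonglongrightarrow> x"
  shows "\<exists>ys. (\<forall>r. ys r \<in> limiting_subdiff f (xs r)) \<and> ys \<longlonglongrightarrow> y"
proof -
  have "\<forall>y\<in>limiting_subdiff f x. \<forall>xs. (\<forall>r. xs r \<in> M) \<and> xs \<longlonglongrightarrow> x \<longrightarrow>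
        (\<exists>ys. (\<forall>r. ys r \<in> limiting_subdiff f (xs r)) \<and> ys \<longlonglongrightarrow> y)"
    using assms(1) unfolding partly_smooth_at_def by blast
  thus ?thesis using assms(2-4) by blast
qed

theorem corollary2:
  fixes f :: "'a::euclidean_space \<Rightarrow> ereal" and M :: "'a set" and xbar :: 'a
  assumes "proper_fun f" and "closed_fun f"
    and "C1_submanifold M" and "xbar \<in> M"
    and "C1_partly_smooth_around f M xbar"
    and "0 \<in> rel_interior (limiting_subdiff f xbar)"
  shows "\<exists>d>0. \<forall>x\<in>M. dist x xbar < d \<longrightarrow>
           gU f x \<in> rel_interior (limiting_subdiff f x) \<and>
           gU f x = closest_point (limiting_subdiff f x) 0"
proof -
  obtain d0 where d0: "d0 > 0" and ps: "\<And>x. x \<in> M \<Longrightarrow> dist x xbar < d0 \<Longrightarrow> partly_smooth_at f M x"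
    using assms(5) unfolding C1_partly_smooth_around_def by blast
  have psx: "partly_smooth_at f M xbar" using ps[OF assms(4)] d0 by simp
  have key: "\<exists>d>0. \<forall>x\<in>M. dist x xbar < d \<longrightarrow> gU f x \<in> rel_interior (limiting_subdiff f x)"
  proof (rule ccontr)
    assume neg: "\<not> ?thesis"
    have "\<forall>r. \<exists>x. x \<in> M \<and> dist x xbar < min d0 (1 / real (Suc r)) \<and> gU f x \<notin> rel_interior (limiting_subdiff f x)"
    proof
      fix r
      have "min d0 (1 / real (Suc r)) > 0" using d0 by simp
      thus "\<exists>x. x \<in> M \<and> dist x xbar < min d0 (1 / real (Suc r)) \<and> gU f x \<notin> rel_interior (limiting_subdiff f x)"
        using neg by blast
    qed
    from choice[OF this] obtain xs where H: "\<forall>r. xs r \<in> M \<and> dist (xs r) xbar < min d0 (1 / real (Suc r)) \<and> gU f (xs r) \<notin> rel_interior (limiting_subdiff f (xs r))"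
      by blast
    have xsM: "\<And>r. xs r \<in> M" using H by blast
    have psr: "\<And>r. partly_smooth_at f M (xs r)" using H ps by force
    have "(\<lambda>r. dist (xs r) xbar) \<longlonglongrightarrow> 0"
    proof (rule Lim_null_comparison[where g = "\<lambda>r. 1 / real (Suc r)"])
      show "\<forall>\<^sub>F r in sequentially. norm (dist (xs r) xbar) \<le> 1 / real (Suc r)"
        using H by (intro always_eventually) (auto intro: less_imp_le)
      show "(\<lambda>r. 1 / real (Suc r)) \<longlonglongrightarrow> 0" using LIMSEQ_Suc[OF lim_inverse_n'] by simp
    qed
    hence xsl: "xs \<longlonglongrightarrow> xbar" by (rule iffD2[OF tendsto_dist_iff])
    have "\<forall>r. \<exists>u. u \<in> normal_space M (xs r) \<and> norm u = 1 \<and>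
        (\<forall>y\<in>limiting_subdiff f (xs r). inner u y \<le> inner u (gU f (xs r)))"
    proof
      fix r
      have ne: "limiting_subdiff f (xs r) \<noteq> {}" and cv: "convex (limiting_subdiff f (xs r))"
        using ps_basic[OF psr] by auto
      have "\<exists>u\<in>V_space f (xs r). norm u = 1 \<and> (\<forall>y\<in>limiting_subdiff f (xs r). inner u y \<le> inner u (gU f (xs r)))"
      proof (rule sep_lemma[OF cv ne])
        show "gU f (xs r) \<notin> rel_interior (limiting_subdiff f (xs r))" using H by blast
        show "subspace (V_space f (xs r))" unfolding V_space_def by (rule subspace_span)
        show "\<And>y. y \<in> limiting_subdiff f (xs r) \<Longrightarrow> y - gU f (xs r) \<in> V_space f (xs r)"
          by (rule gU_props(2)[OF ne])
      qed
      then obtain u where u: "u \<in> V_space f (xs r)" "norm u = 1"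
        "\<forall>y\<in>limiting_subdiff f (xs r). inner u y \<le> inner u (gU f (xs r))" by blast
      have "u \<in> normal_space M (xs r)" using V_sub[OF ne u(1)] ps_sharp[OF psr] by simp
      thus "\<exists>u. u \<in> normal_space M (xs r) \<and> norm u = 1 \<and>
        (\<forall>y\<in>limiting_subdiff f (xs r). inner u y \<le> inner u (gU f (xs r)))" using u by blast
    qed
    from choice[OF this] obtain us where us: "\<forall>r. us r \<in> normal_space M (xs r) \<and> norm (us r) = 1 \<and>
        (\<forall>y\<in>limiting_subdiff f (xs r). inner (us r) y \<le> inner (us r) (gU f (xs r)))"
      by blast
    have z0: "0 \<in> limiting_subdiff f xbar" using assms(6) rel_interior_subset by blast
    obtain zs where zs: "\<forall>r. zs r \<in> limiting_subdiff f (xs r)" "zs \<longlonglongrightarrow> 0"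
      using ps_isc[OF psx z0 xsM xsl] by blast
    have gl: "(\<lambda>r. gU f (xs r)) \<longlonglongrightarrow> 0"
    proof (rule Lim_null_comparison[where g = "\<lambda>r. norm (zs r)"])
      show "\<forall>\<^sub>F r in sequentially. norm (gU f (xs r)) \<le> norm (zs r)"
        using zs(1) gU_props(3)[OF ps_basic(1)[OF psr]] by (intro always_eventually) blast
      show "(\<lambda>r. norm (zs r)) \<longlonglongrightarrow> 0" using zs(2) by (rule tendsto_norm_zero)
    qed
    have "bounded (range us)" unfolding bounded_iff using us by (intro exI[of _ 1]) auto
    then obtain \<sigma> u where \<sigma>: "strict_mono \<sigma>" and ul: "(us \<circ> \<sigma>) \<longlonglongrightarrow> u"
      using bounded_imp_convergent_subsequence by blast
    have xsl2: "(xs \<circ> \<sigma>) \<longlonglongrightarrow> xbar" using LIMSEQ_subseq_LIMSEQ[OF xsl \<sigma>] .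
    have uN: "u \<in> normal_space M xbar"
      by (rule normal_limit[OF assms(3) assms(4) xsl2 _ _ ul]) (use xsM us in auto)
    have "(\<lambda>r. norm ((us \<circ> \<sigma>) r)) \<longlonglongrightarrow> norm u" using ul by (rule tendsto_norm)
    moreover have "(\<lambda>r. norm ((us \<circ> \<sigma>) r)) = (\<lambda>r. 1)" using us by auto
    ultimately have nu: "norm u = 1" using LIMSEQ_unique tendsto_const by metis
    have le0: "inner u s \<le> 0" if s: "s \<in> limiting_subdiff f xbar" for s
    proof -
      obtain ss where ss: "\<forall>r. ss r \<in> limiting_subdiff f ((xs \<circ> \<sigma>) r)" "ss \<longlonglongrightarrow> s"
        using ps_isc[OF psx s, of "xs \<circ> \<sigma>"] xsM xsl2 by auto
      have gl2: "(\<lambda>r. gU f (xs (\<sigma> r))) \<longlonglongrightarrow> 0" using LIMSEQ_subseq_LIMSEQ[OF gl \<sigma>] by (simp add: o_def)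
      have t1: "(\<lambda>r. inner ((us \<circ> \<sigma>) r) (ss r)) \<longlonglongrightarrow> inner u s" by (rule tendsto_inner[OF ul ss(2)])
      have t2: "(\<lambda>r. inner ((us \<circ> \<sigma>) r) (gU f (xs (\<sigma> r)))) \<longlonglongrightarrow> inner u 0" by (rule tendsto_inner[OF ul gl2])
      have "\<forall>\<^sub>F r in sequentially. inner ((us \<circ> \<sigma>) r) (ss r) \<le> inner ((us \<circ> \<sigma>) r) (gU f (xs (\<sigma> r)))"
        using us ss(1) by (intro always_eventually) auto
      hence "inner u s \<le> inner u 0" using t1 t2 by (intro tendsto_le[OF trivial_limit_sequentially t2 t1])
      thus ?thesis by simp
    qed
    have "u \<in> par (limiting_subdiff f xbar)" using uN ps_sharp[OF psx] by simp
    then obtain a b where ab: "a \<in> affine hull (limiting_subdiff f xbar)" "b \<in> affine hull (limiting_subdiff f xbar)" "u = a - b"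
      unfolding par_def by blast
    obtain e where e: "e > 0" "ball 0 e \<inter> affine hull (limiting_subdiff f xbar) \<subseteq> limiting_subdiff f xbar"
      using assms(6) mem_rel_interior_ball by blast
    have "0 \<in> affine hull (limiting_subdiff f xbar)" using z0 by (simp add: hull_inc)
    hence "0 + (e/2) *\<^sub>R (a - b) \<in> affine hull (limiting_subdiff f xbar)"
      using ab by (intro mem_affine_3_minus) (auto simp: affine_affine_hull)
    moreover have "(e/2) *\<^sub>R u \<in> ball 0 e" using nu e(1) by simp
    ultimately have "(e/2) *\<^sub>R u \<in> limiting_subdiff f xbar" using e(2) ab(3) by auto
    hence "inner u ((e/2) *\<^sub>R u) \<le> 0" by (rule le0)
    moreover have "inner u ((e/2) *\<^sub>R u) = e/2"
      using nu by (simp add: power2_norm_eq_inner[symmetric])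
    ultimately show False using e(1) by simp
  qed
  then obtain d1 where d1: "d1 > 0" "\<forall>x\<in>M. dist x xbar < d1 \<longrightarrow> gU f x \<in> rel_interior (limiting_subdiff f x)"
    by blast
  show ?thesis
  proof (intro exI[of _ "min d0 d1"] conjI ballI impI)
    show "min d0 d1 > 0" using d0 d1 by simp
    fix x assume x: "x \<in> M" "dist x xbar < min d0 d1"
    show ri: "gU f x \<in> rel_interior (limiting_subdiff f x)" using d1 x by auto
    have ne: "limiting_subdiff f x \<noteq> {}" using ps_basic(1)[OF ps] x by auto
    have "gU f x \<in> limiting_subdiff f x" using ri rel_interior_subset by blast
    thus "gU f x = closest_point (limiting_subdiff f x) 0" using gU_props(4)[OF ne] by simp
  qed
qed

end
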